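(* Let $p\propto\exp(-f)$ be a probability density on $\mathbb{R}^d$, where $f:\mathbb{R}^d\to\mathbb{R}$ has $L$-Lipschitz gradient and $M:=\mathbb{E}_{\mathbf{x}\sim p}[\|\mathbf{x}\|^2]<\infty$. Let $\varphi_1$ be the density of the standard Gaussian $\mathcal{N}(0,I_d)$. Then $\mathrm{KL}(p\,\|\,\varphi_1)\le Ld+M$. *)

theory Defs
  imports "HOL-Analysis.Analysis"
begin

definition std_gauss_density :: "'a::euclidean_space \<Rightarrow> real" where
  "std_gauss_density x = (2 * pi) powr (- real DIM('a) / 2) * exp (- (norm x)\<^sup>2 / 2)"

definition KL_dens :: "('a::euclidean_space \<Rightarrow> real) \<Rightarrow> ('a \<Rightarrow> real) \<Rightarrow> real" where
  "KL_dens p q = (\<integral>x. p x * ln (p x / q x) \<partial>lborel)"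

end

theory Submission
  imports Defs
begin

lemma exp_amgm: "2 * exp ((a+b)/2) \<le> exp a + exp (b::real)"
proof -
  define m where "m = (a+b)/2"
  define e where "e = (a-b)/2"
  have a: "a = m + e" and b: "b = m + - e" unfolding m_def e_def by (auto simp: field_simps)
  have "2 \<le> exp e + exp (-e)" using exp_ge_add_one_self[of e] exp_ge_add_one_self[of "-e"] by linarith
  hence "exp m * 2 \<le> exp m * (exp e + exp (-e))" by simp
  thus ?thesis unfolding a b exp_add m_def[symmetric] by (simp add: algebra_simps m_def)
qed

lemma descent:
  fixes f :: "'a::euclidean_space \<Rightarrow> real" and g :: "'a \<Rightarrow> 'a"
  assumes grad: "\<And>x. (f has_derivative (\<lambda>h. g x \<bullet> h)) (at x)"
    and lip: "L-lipschitz_on UNIV g"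
  shows "f (x + u) \<le> f x + g x \<bullet> u + L/2 * (norm u)\<^sup>2"
proof -
  define h where "h t = f (x + t *\<^sub>R u) - t * (g x \<bullet> u) - L/2 * t\<^sup>2 * (norm u)\<^sup>2" for t
  have "h 1 \<le> h 0"
  proof (rule DERIV_nonpos_imp_nonincreasing[of 0 1 h])
    fix t :: real assume t: "0 \<le> t" "t \<le> 1"
    have d1: "((\<lambda>t. x + t *\<^sub>R u) has_derivative (\<lambda>s. s *\<^sub>R u)) (at t)"
      by (auto intro!: derivative_eq_intros)
    have d2: "((\<lambda>t. f (x + t *\<^sub>R u)) has_derivative (\<lambda>s. g (x + t *\<^sub>R u) \<bullet> (s *\<^sub>R u))) (at t)"
      using has_derivative_compose[OF d1 grad] by simp
    have d3: "((\<lambda>t. f (x + t *\<^sub>R u)) has_real_derivative (g (x + t *\<^sub>R u) \<bullet> u)) (at t)"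
      unfolding has_field_derivative_def by (rule has_derivative_eq_rhs[OF d2]) (auto simp: fun_eq_iff)
    have "(h has_real_derivative (g (x + t *\<^sub>R u) \<bullet> u - g x \<bullet> u - L/2 * (2 * t) * (norm u)\<^sup>2)) (at t)"
      unfolding h_def by (auto intro!: derivative_eq_intros d3)
    moreover have "g (x + t *\<^sub>R u) \<bullet> u - g x \<bullet> u - L/2 * (2 * t) * (norm u)\<^sup>2 \<le> 0"
    proof -
      have "g (x + t *\<^sub>R u) \<bullet> u - g x \<bullet> u = (g (x + t *\<^sub>R u) - g x) \<bullet> u" by (simp add: inner_diff_left)
      also have "\<dots> \<le> norm (g (x + t *\<^sub>R u) - g x) * norm u" by (rule norm_cauchy_schwarz)
      also have "\<dots> \<le> L * (t * norm u) * norm u"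
      proof -
        have "norm (g (x + t *\<^sub>R u) - g x) \<le> L * (t * norm u)"
          using lipschitz_onD[OF lip, of "x + t *\<^sub>R u" x] t by (simp add: dist_norm)
        thus ?thesis by (simp add: mult_right_mono)
      qed
      finally show ?thesis by (simp add: power2_eq_square algebra_simps)
    qed
    ultimately show "\<exists>y. (h has_real_derivative y) (at t) \<and> y \<le> 0" by blast
  qed simp
  thus ?thesis unfolding h_def by simp
qed

lemma affine_pm:
  fixes h :: "'a::euclidean_space \<Rightarrow> real"
  assumes "integrable lborel h" "\<bar>c\<bar> = 1"
  shows "integrable lborel (\<lambda>x. h (t + c *\<^sub>R x))" "integral\<^sup>L lborel (\<lambda>x. h (t + c *\<^sub>R x)) = integral\<^sup>L lborel h"
proof -
  have c: "c \<noteq> 0" using assms by auto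
  have eq: "lborel = distr lborel borel (\<lambda>x. t + c *\<^sub>R x)"
    using lborel_affine[OF c, of t] assms(2) by (simp add: density_1)
  have m: "(\<lambda>x. t + c *\<^sub>R x) \<in> borel_measurable lborel" by measurable
  show "integrable lborel (\<lambda>x. h (t + c *\<^sub>R x))"
  proof -
    have "h \<in> borel_measurable borel" using borel_measurable_integrable[OF assms(1)] by simp
    thus ?thesis using assms(1) integrable_distr_eq[OF m, of h] eq by simp
  qed
  show "integral\<^sup>L lborel (\<lambda>x. h (t + c *\<^sub>R x)) = integral\<^sup>L lborel h"
  proof -
    have "h \<in> borel_measurable borel" using borel_measurable_integrable[OF assms(1)] by simp
    thus ?thesis using integral_distr[OF m, of h] eq by simp
  qed
qed


lemma cube_norm:
  fixes u :: "'a::euclidean_space"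
  assumes "u \<in> cbox (-(r *\<^sub>R One)) (r *\<^sub>R One)"
  shows "(norm u)\<^sup>2 \<le> real DIM('a) * r\<^sup>2"
proof -
  have b: "\<bar>u \<bullet> i\<bar> \<le> r" if "i \<in> Basis" for i
    using assms that by (auto simp: mem_box inner_minus_left)
  have "(norm u)\<^sup>2 = u \<bullet> u" by (simp add: power2_norm_eq_inner)
  also have "\<dots> = (\<Sum>i\<in>Basis. (u \<bullet> i)\<^sup>2)" by (subst euclidean_inner) (simp add: power2_eq_square)
  also have "\<dots> \<le> (\<Sum>i\<in>(Basis::'a set). r\<^sup>2)"
  proof (rule sum_mono)
    fix i :: 'a assume "i \<in> Basis"
    hence "\<bar>u \<bullet> i\<bar> \<le> r" by (rule b)
    thus "(u \<bullet> i)\<^sup>2 \<le> r\<^sup>2" by (metis abs_ge_zero abs_le_square_iff abs_of_nonneg order_trans power2_abs)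
  qed
  also have "\<dots> = real DIM('a) * r\<^sup>2" by simp
  finally show ?thesis .
qed

lemma cube_content:
  assumes "r \<ge> 0"
  shows "measure lborel (cbox (-(r *\<^sub>R One)) (r *\<^sub>R (One::'a::euclidean_space))) = (2*r) ^ DIM('a)"
proof -
  have "measure lborel (cbox (-(r *\<^sub>R One)) (r *\<^sub>R (One::'a))) = (\<Prod>i\<in>(Basis::'a set). r - - r)"
    using assms by (subst content_cbox) (auto simp: inner_minus_left)
  thus ?thesis by (simp add: prod_constant)
qed

lemma lowerZ:
  fixes f :: "'a::euclidean_space \<Rightarrow> real" and g :: "'a \<Rightarrow> 'a"
  assumes grad: "\<And>x. (f has_derivative (\<lambda>h. g x \<bullet> h)) (at x)"
    and lip: "L-lipschitz_on UNIV g"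
    and normalizable: "integrable lborel (\<lambda>x. exp (- f x))"
    and r: "r > 0"
  shows "(2*r) ^ DIM('a) * exp (- f x - L * DIM('a) * r\<^sup>2 / 2) \<le> (\<integral>y. exp (- f y) \<partial>lborel)"
proof -
  define Z where "Z = (\<integral>y. exp (- f y) \<partial>lborel)"
  define C where "C = cbox (-(r *\<^sub>R One)) (r *\<^sub>R (One::'a))"
  define K where "K = exp (- f x - L * DIM('a) * r\<^sup>2 / 2)"
  have L0: "L \<ge> 0" using lip by (rule lipschitz_on_nonneg)
  have hint: "((\<lambda>u. exp (- f (x + c *\<^sub>R u))) has_integral Z) UNIV" if "\<bar>c\<bar> = 1" for c
    using has_integral_integral_lborel[OF affine_pm(1)[OF normalizable that, of x]]
      affine_pm(2)[OF normalizable that, of x] unfolding Z_def by simp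
  have sub: "integral C (\<lambda>u. exp (- f (x + c *\<^sub>R u))) \<le> Z" if "\<bar>c\<bar> = 1" for c
  proof -
    have "integral C (\<lambda>u. exp (- f (x + c *\<^sub>R u))) \<le> integral UNIV (\<lambda>u. exp (- f (x + c *\<^sub>R u)))"
      by (rule integral_subset_le) (use hint[OF that] integrable_on_subcbox[of _ UNIV] in \<open>auto simp: C_def has_integral_integrable\<close>)
    thus ?thesis using hint[OF that] by (simp add: integral_unique)
  qed
  have ion: "(\<lambda>u. exp (- f (x + c *\<^sub>R u))) integrable_on C" if "\<bar>c\<bar> = 1" for c
    using hint[OF that] integrable_on_subcbox[of _ UNIV] by (auto simp: C_def has_integral_integrable)
  have pw: "2 * K \<le> exp (- f (x + 1 *\<^sub>R u)) + exp (- f (x + (-1) *\<^sub>R u))" if "u \<in> C" for u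
  proof -
    have n: "(norm u)\<^sup>2 \<le> real DIM('a) * r\<^sup>2" using cube_norm that unfolding C_def by blast
    have d1: "f (x + u) \<le> f x + g x \<bullet> u + L/2 * (norm u)\<^sup>2" by (rule descent[OF grad lip])
    have d2: "f (x + -u) \<le> f x + g x \<bullet> (-u) + L/2 * (norm (-u))\<^sup>2" by (rule descent[OF grad lip])
    have "L * (norm u)\<^sup>2 \<le> L * (real DIM('a) * r\<^sup>2)" using n L0 by (rule mult_left_mono)
    hence "- f x - L * DIM('a) * r\<^sup>2 / 2 \<le> (- f (x + u) + - f (x + -u)) / 2"
      using d1 d2 by (simp add: algebra_simps)
    hence "K \<le> exp ((- f (x + u) + - f (x + -u)) / 2)" unfolding K_def by simp
    also have "2 * \<dots> \<le> exp (- f (x + u)) + exp (- f (x + -u))" by (rule exp_amgm)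
    finally show ?thesis by simp
  qed
  have "integral C (\<lambda>u. 2 * K) \<le> integral C (\<lambda>u. exp (- f (x + 1 *\<^sub>R u)) + exp (- f (x + (-1) *\<^sub>R u)))"
    by (rule integral_le) (use pw ion[of 1] ion[of "-1"] in \<open>auto simp: C_def intro!: integrable_add\<close>)
  also have "\<dots> = integral C (\<lambda>u. exp (- f (x + 1 *\<^sub>R u))) + integral C (\<lambda>u. exp (- f (x + (-1) *\<^sub>R u)))"
    by (rule integral_add) (use ion[of 1] ion[of "-1"] in auto)
  also have "\<dots> \<le> Z + Z" using sub[of 1] sub[of "-1"] by simp
  finally have le: "integral C (\<lambda>u. 2 * K) \<le> Z + Z" .
  have cc: "measure lborel C = (2*r)^DIM('a)" unfolding C_def by (rule cube_content) (use r in simp)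
  have eq: "integral C (\<lambda>u. 2 * K) = (2*r)^DIM('a) * (2 * K)"
    using integral_const[of "-(r *\<^sub>R One)" "r *\<^sub>R (One::'a)" "2*K"] unfolding C_def[symmetric] cc by simp
  have "(2*r) ^ DIM('a) * (2 * K) \<le> 2 * Z" using le eq by linarith
  thus ?thesis unfolding K_def Z_def by simp
qed


lemma lo_helper:
  fixes q gx G n c L fx lz f0 :: real
  assumes "gx \<le> (G + n)/2" "0 \<le> c" "0 \<le> L" "0 \<le> G" "0 \<le> n" "q = - fx - lz + c + n/2" "fx \<le> f0 + gx + L/2*n"
  shows "- (\<bar>f0\<bar> + G + \<bar>lz\<bar>) - (L+1)*n \<le> q"
proof -
  have a: "2*gx \<le> G + n" using assms(1) by simp
  have b: "2*q = - 2*fx - 2*lz + 2*c + n" using assms(6) by simp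
  have c: "2*fx \<le> 2*f0 + 2*gx + L*n" using assms(7) by (simp add: algebra_simps)
  have Ln: "0 \<le> L*n" using assms by simp
  have s1: "2*q \<ge> -2*f0 - G - L*n - 2*lz" using a b c assms(2) by linarith
  have "f0 \<le> \<bar>f0\<bar>" "lz \<le> \<bar>lz\<bar>" by auto
  hence s2: "-2*f0 - G - L*n - 2*lz \<ge> - 2*\<bar>f0\<bar> - 2*G - 2*\<bar>lz\<bar> - 2*(L*n) - 2*n" using Ln assms(4,5) by linarith
  have "(L+1)*n = L*n + n" by (simp add: algebra_simps)
  thus ?thesis using s1 s2 by linarith
qed

theorem lemma3:
  fixes f :: "'a::euclidean_space \<Rightarrow> real" and g :: "'a \<Rightarrow> 'a" and L :: real
  assumes grad: "\<And>x. (f has_derivative (\<lambda>h. g x \<bullet> h)) (at x)"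
    and lip: "L-lipschitz_on UNIV g"
    and normalizable: "integrable lborel (\<lambda>x. exp (- f x))"
    and moment: "integrable lborel (\<lambda>x. exp (- f x) / (\<integral>y. exp (- f y) \<partial>lborel) * (norm x)\<^sup>2)"
  defines "p \<equiv> (\<lambda>x. exp (- f x) / (\<integral>y. exp (- f y) \<partial>lborel))"
    and "M \<equiv> (\<integral>x. exp (- f x) / (\<integral>y. exp (- f y) \<partial>lborel) * (norm x)\<^sup>2 \<partial>lborel)"
  shows "integrable lborel (\<lambda>x. p x * ln (p x / std_gauss_density x))
         \<and> KL_dens p std_gauss_density \<le> L * real DIM('a) + M"
proof -
  define Z where "Z = (\<integral>y. exp (- f y) \<partial>lborel)"
  define d where "d = real DIM('a)"
  have pe: "p x = exp (- f x) / Z" for x unfolding p_def Z_def by simp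
  have mom: "integrable lborel (\<lambda>x. p x * (norm x)\<^sup>2)" using moment unfolding p_def by simp
  have Me: "M = (\<integral>x. p x * (norm x)\<^sup>2 \<partial>lborel)" unfolding M_def p_def by simp
  have lowZ: "(2*r) ^ DIM('a) * exp (- f x - L * d * r\<^sup>2 / 2) \<le> Z" if "r > 0" for x r
    using lowerZ[OF grad lip normalizable that, of x] unfolding Z_def d_def by simp
  have d1: "d \<ge> 1" unfolding d_def using DIM_positive[where 'a='a] by linarith
  have L0: "L \<ge> 0" using lip by (rule lipschitz_on_nonneg)
  have Zpos: "Z > 0"
  proof -
    have "0 < (2*1::real) ^ DIM('a) * exp (- f 0 - L * d * 1\<^sup>2 / 2)" by simp
    also have "\<dots> \<le> Z" by (rule lowZ) simp
    finally show ?thesis .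
  qed
  have Lpos: "L > 0"
  proof (rule ccontr)
    assume "\<not> L > 0"
    hence L: "L = 0" using L0 by simp
    define e where "e = exp (- f 0)"
    have e: "e > 0" unfolding e_def by simp
    define r where "r = (Z / e + 2) / 2"
    have r: "r > 0" "2 * r \<ge> 1" unfolding r_def using Zpos e by (auto simp: field_simps)
    have "(2*r) ^ 1 \<le> (2*r) ^ DIM('a)" by (rule power_increasing) (use r DIM_positive in auto)
    hence "2*r*e \<le> (2*r) ^ DIM('a) * e" using e by simp
    also have "\<dots> \<le> Z" using lowZ[OF r(1), of 0] L unfolding e_def by simp
    finally have "2*r*e \<le> Z" .
    moreover have "2*r*e = Z + 2*e" unfolding r_def using e by (simp add: field_simps)
    ultimately show False using e by simp
  qed
  have lnp: "- f x - ln Z \<le> d/2 * ln L + d/2 - d * ln 2" for x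
  proof -
    define r where "r = 1 / sqrt L"
    have r: "r > 0" unfolding r_def using Lpos by simp
    have r2: "L * r\<^sup>2 = 1" unfolding r_def using Lpos by (simp add: power_divide)
    have "ln ((2*r) ^ DIM('a) * exp (- f x - L * d * r\<^sup>2 / 2)) \<le> ln Z"
      using lowZ[OF r, of x] r Zpos by (subst ln_le_cancel_iff) auto
    moreover have "ln ((2*r) ^ DIM('a) * exp (- f x - L * d * r\<^sup>2 / 2)) = d * (ln 2 - ln L / 2) - f x - d/2"
    proof -
      have a: "ln (2*r) = ln 2 - ln L / 2" unfolding r_def using Lpos by (simp add: ln_div ln_sqrt)
      have b: "L * d * r\<^sup>2 = d" using r2 by (simp add: algebra_simps)
      have c: "ln ((2*r) ^ DIM('a) * exp (- f x - L * d * r\<^sup>2 / 2)) = d * ln (2*r) + (- f x - L * d * r\<^sup>2 / 2)"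
        using r by (simp add: ln_mult ln_realpow d_def distrib_left)
      show ?thesis unfolding c unfolding a b by simp
    qed
    ultimately show ?thesis by (simp add: algebra_simps)
  qed
  have key: "d/2 * ln L + d/2 - d * ln 2 + d/2 * ln (2*pi) \<le> L * d"
  proof -
    have a: "ln 2 + ln L \<le> 2 * L - 1" using ln_le_minus_one[of "2*L"] Lpos by (simp add: ln_mult)
    have b: "ln (2*pi) = ln 2 + ln pi" by (simp add: ln_mult)
    have c: "ln pi \<le> 2 * ln 2"
    proof -
      have "ln pi \<le> ln 4" using pi_less_4 by simp
      also have "ln (4::real) = 2 * ln 2" using ln_realpow[of 2 2] by simp
      finally show ?thesis .
    qed
    have "ln L + 1 - 2 * ln 2 + ln (2*pi) \<le> 2 * L" using a b c by linarith
    hence "d/2 * (ln L + 1 - 2 * ln 2 + ln (2*pi)) \<le> d/2 * (2 * L)" using d1 by (intro mult_left_mono) auto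
    thus ?thesis by (simp add: algebra_simps)
  qed
  define q where "q x = ln (p x / std_gauss_density x)" for x
  have qe: "q x = - f x - ln Z + d/2 * ln (2*pi) + (norm x)\<^sup>2 / 2" for x
    unfolding q_def pe std_gauss_density_def d_def using Zpos
    by (simp add: ln_div ln_mult)
  have qup: "q x \<le> L * d + (norm x)\<^sup>2 / 2" for x using qe[of x] lnp[of x] key by linarith
  have ln2pi: "ln (2*pi) \<ge> 0" using pi_gt3 by simp
  have qlo: "q x \<ge> - (\<bar>f 0\<bar> + (norm (g 0))\<^sup>2 + \<bar>ln Z\<bar>) - (L+1) * (norm x)\<^sup>2" for x
  proof -
    have de: "f x \<le> f 0 + g 0 \<bullet> x + L/2 * (norm x)\<^sup>2" using descent[OF grad lip, of 0 x] by simp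
    have "g 0 \<bullet> x \<le> norm (g 0) * norm x" by (rule norm_cauchy_schwarz)
    also have "\<dots> \<le> ((norm (g 0))\<^sup>2 + (norm x)\<^sup>2) / 2"
      using sum_squares_bound[of "norm (g 0)" "norm x"] by (simp add: power2_eq_square)
    finally have "g 0 \<bullet> x \<le> ((norm (g 0))\<^sup>2 + (norm x)\<^sup>2) / 2" .
    moreover have "0 \<le> d/2 * ln (2*pi)" using ln2pi d1 by simp
    ultimately show ?thesis
      by (intro lo_helper[where gx="g 0 \<bullet> x" and G="(norm (g 0))\<^sup>2" and n="(norm x)\<^sup>2" and c="d/2 * ln (2*pi)"
            and fx="f x" and lz="ln Z"]) (use qe[of x] de L0 in auto)
  qed
  define A where "A = \<bar>f 0\<bar> + (norm (g 0))\<^sup>2 + \<bar>ln Z\<bar> + L * d"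
  have pnn: "p x > 0" for x unfolding pe using Zpos by simp
  have qabs: "\<bar>q x\<bar> \<le> A + (L+1) * (norm x)\<^sup>2" for x
  proof -
    have h1: "0 \<le> (L+1)*(norm x)\<^sup>2" using L0 by simp
    have h2: "(norm x)\<^sup>2/2 \<le> (L+1)*(norm x)\<^sup>2" using L0 by (simp add: algebra_simps)
    have h3: "0 \<le> L*d" using L0 d1 by simp
    have h4: "0 \<le> (norm (g 0))\<^sup>2" "0 \<le> \<bar>f 0\<bar>" "0 \<le> \<bar>ln Z\<bar>" by auto
    show ?thesis unfolding abs_le_iff A_def using qup[of x] qlo[of x] h1 h2 h3 h4 by linarith
  qed
  have contf: "continuous_on UNIV f"
    using grad by (intro continuous_at_imp_continuous_on ballI has_derivative_continuous) auto
  have fm: "f \<in> borel_measurable borel" by (rule borel_measurable_continuous_onI[OF contf])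
  have pint: "integrable lborel p" unfolding pe using normalizable by simp
  have F: "integrable lborel (\<lambda>x. A * p x + (L+1) * (p x * (norm x)\<^sup>2))"
    using pint mom by auto
  have meas: "(\<lambda>x. p x * ln (p x / std_gauss_density x)) \<in> borel_measurable lborel"
    unfolding pe std_gauss_density_def using fm by measurable
  have I: "integrable lborel (\<lambda>x. p x * ln (p x / std_gauss_density x))"
  proof (rule Bochner_Integration.integrable_bound[OF F meas], rule AE_I2)
    fix x
    have "norm (p x * ln (p x / std_gauss_density x)) = p x * \<bar>q x\<bar>"
      using pnn[of x] unfolding q_def by (simp add: abs_mult)
    also have "\<dots> \<le> p x * (A + (L+1) * (norm x)\<^sup>2)" using qabs[of x] pnn[of x] by (intro mult_left_mono) auto
    also have "\<dots> \<le> norm (A * p x + (L+1) * (p x * (norm x)\<^sup>2))" by (simp add: algebra_simps)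
    finally show "norm (p x * ln (p x / std_gauss_density x)) \<le> norm (A * p x + (L+1) * (p x * (norm x)\<^sup>2))" .
  qed
  have p1: "integral\<^sup>L lborel p = 1" unfolding pe using Zpos by (simp add: Z_def)
  have M0: "M \<ge> 0" unfolding Me using pnn by (intro Bochner_Integration.integral_nonneg) (simp add: less_imp_le)
  have "KL_dens p std_gauss_density \<le> (\<integral>x. (L * d) * p x + 1/2 * (p x * (norm x)\<^sup>2) \<partial>lborel)"
    unfolding KL_dens_def
  proof (rule integral_mono[OF I])
    show "integrable lborel (\<lambda>x. (L * d) * p x + 1/2 * (p x * (norm x)\<^sup>2))" using pint mom by auto
    fix x
    have "p x * ln (p x / std_gauss_density x) = p x * q x" unfolding q_def by simp
    also have "\<dots> \<le> p x * (L * d + (norm x)\<^sup>2 / 2)" using qup[of x] pnn[of x] by (intro mult_left_mono) auto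
    finally show "p x * ln (p x / std_gauss_density x) \<le> (L * d) * p x + 1/2 * (p x * (norm x)\<^sup>2)"
      by (simp add: algebra_simps)
  qed
  also have "\<dots> = L * d + M / 2"
    using pint mom p1 unfolding Me by (simp add: integral_add)
  finally show ?thesis using I M0 unfolding d_def by simp
qed

end
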